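(* Let $D$ be a positive integer and $p$ a prime with $D>p^2$. Let $f$ be a reduced form of discriminant $-4Dp^2$ whose class in $C(-4Dp^2)$ is derived from the class of $e_{-4D}=(1,0,D)$ in $C(-4D)$, and suppose $f$ is not equivalent to $e_{-4Dp^2}=(1,0,Dp^2)$. Then \[ f=(p^2,\;2pk,\;k^2+D) \] for some integer $k$ with $-p/2\le k\le p/2$.
   Context: A binary quadratic form $(a,b,c)$ means $ax^2+bxy+cy^2$ with $a,b,c\in\mathbb Z$, of discriminant $b^2-4ac$; it is primitive if $\gcd(a,b,c)=1$. Two forms are equivalent if one is obtained from the other by a substitution $(x,y)\mapsto(px+qy,\,sx+ty)$ with integer coefficients and $pt-qs=1$. A form $(a,b,c)$ of negative discriminant is reduced if $|b|\le a\le c$, and $b\ge 0$ whenever $|b|=a$ or $a=c$; every positive definite form is equivalent to a unique reduced form. For $\Delta<0$, $C(\Delta)$ is the class group of equivalence classes of primitive positive definite forms of discriminant $\Delta$ under composition. For a positive integer $r$, a class $f\in C(\Delta r^2)$ is derived from a class $g\in C(\Delta)$ if there exist a representative $g_0$ of $g$ and an integer matrix $\begin{pmatrix}\alpha&\beta\\ \gamma&\delta\end{pmatrix}$ of determinant $r$ such that the form $g_0(\alpha x+\beta y,\gamma x+\delta y)$ lies in the class $f$. *)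

theory Defs
  imports "HOL-Computational_Algebra.Primes"
begin

type_synonym bqf = "int \<times> int \<times> int"   (* (a,b,c) = a x^2 + b x y + c y^2 *)

fun disc :: "bqf \<Rightarrow> int" where
  "disc (a, b, c) = b^2 - 4*a*c"

fun primitive :: "bqf \<Rightarrow> bool" where
  "primitive (a, b, c) = (gcd a (gcd b c) = 1)"

fun pos_def :: "bqf \<Rightarrow> bool" where
  "pos_def (a, b, c) = (a > 0 \<and> b^2 - 4*a*c < 0)"

text \<open>The form g(al x + be y, ga x + de y).\<close>
fun subst_form :: "bqf \<Rightarrow> int \<Rightarrow> int \<Rightarrow> int \<Rightarrow> int \<Rightarrow> bqf" where
  "subst_form (a, b, c) al be ga de =
     (a*al^2 + b*al*ga + c*ga^2,
      2*a*al*be + b*(al*de + be*ga) + 2*c*ga*de,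
      a*be^2 + b*be*de + c*de^2)"

definition form_equiv :: "bqf \<Rightarrow> bqf \<Rightarrow> bool" where
  "form_equiv f g \<longleftrightarrow> (\<exists>p q s t. p*t - q*s = 1 \<and> g = subst_form f p q s t)"

fun reduced :: "bqf \<Rightarrow> bool" where
  "reduced (a, b, c) = (\<bar>b\<bar> \<le> a \<and> a \<le> c \<and> ((\<bar>b\<bar> = a \<or> a = c) \<longrightarrow> b \<ge> 0))"

definition derived_from :: "int \<Rightarrow> bqf \<Rightarrow> bqf \<Rightarrow> bool" where
  "derived_from r f g \<longleftrightarrow>
     (\<exists>g0 al be ga de. form_equiv g g0 \<and> al*de - be*ga = r \<and>
        form_equiv (subst_form g0 al be ga de) f)"

end

theory Submission
  imports Defs
begin

lemma subst_comp:
  "subst_form (subst_form g a1 b1 c1 d1) a2 b2 c2 d2 =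
   subst_form g (a1*a2 + b1*c2) (a1*b2 + b1*d2) (c1*a2 + d1*c2) (c1*b2 + d1*d2)"
  by (cases g) (simp add: algebra_simps power2_eq_square)

lemma le_mult1: "(1::int) \<le> t \<Longrightarrow> 0 \<le> a \<Longrightarrow> a \<le> a*t"
  by (metis mult_left_mono mult.right_neutral)

lemma reduced_min:
  fixes a b c x y :: int
  assumes "\<bar>b\<bar> \<le> a" "a \<le> c" "(x, y) \<noteq> (0, 0)"
  shows "a \<le> a*x^2 + b*x*y + c*y^2"
proof -
  have bxy: "b*x*y \<ge> - (a * \<bar>x\<bar> * \<bar>y\<bar>)"
  proof -
    have "\<bar>b*x*y\<bar> = \<bar>b\<bar>*\<bar>x\<bar>*\<bar>y\<bar>" by (simp add: abs_mult)
    also have "\<dots> \<le> a*\<bar>x\<bar>*\<bar>y\<bar>" using assms(1) by (simp add: mult_right_mono)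
    finally show ?thesis by linarith
  qed
  have bxy2: "b*x*y \<ge> - (c * \<bar>x\<bar> * \<bar>y\<bar>)"
  proof -
    have "a * \<bar>x\<bar> * \<bar>y\<bar> \<le> c * \<bar>x\<bar> * \<bar>y\<bar>" using assms(2) by (simp add: mult_right_mono)
    thus ?thesis using bxy by linarith
  qed
  have a0: "a \<ge> 0" using assms(1) by linarith
  show ?thesis
  proof (cases "\<bar>x\<bar> \<ge> \<bar>y\<bar>")
    case True
    have x2: "x^2 = \<bar>x\<bar>*\<bar>x\<bar>" "y^2 = \<bar>y\<bar>*\<bar>y\<bar>" by (simp_all add: power2_eq_square abs_mult[symmetric])
    have "a*\<bar>x\<bar>*(\<bar>x\<bar> - \<bar>y\<bar>) \<ge> 0" using True a0 by simp
    hence h: "a*x^2 + b*x*y + c*y^2 \<ge> c*y^2" using bxy x2 by (simp add: algebra_simps)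
    show ?thesis
    proof (cases "y = 0")
      case True
      then have "x \<noteq> 0" using assms(3) by auto
      then have "x^2 \<ge> 1" by (simp add: power2_eq_square) (smt (verit) mult_le_cancel_left1 zero_less_mult_iff)
      then have "a*x^2 \<ge> a" using a0 by (simp add: le_mult1)
      thus ?thesis using True by simp
    next
      case False
      then have "y^2 \<ge> 1" by (simp add: power2_eq_square) (smt (verit) mult_le_cancel_left1 zero_less_mult_iff)
      then have "c*y^2 \<ge> c" using a0 assms(2) by (simp add: le_mult1)
      thus ?thesis using h assms(2) by linarith
    qed
  next
    case False
    have x2: "x^2 = \<bar>x\<bar>*\<bar>x\<bar>" "y^2 = \<bar>y\<bar>*\<bar>y\<bar>" by (simp_all add: power2_eq_square abs_mult[symmetric])
    have c0: "c \<ge> 0" using a0 assms(2) by linarith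
    have "c*\<bar>y\<bar>*(\<bar>y\<bar> - \<bar>x\<bar>) \<ge> 0" using False c0 by simp
    hence h: "a*x^2 + b*x*y + c*y^2 \<ge> a*x^2" using bxy2 x2 by (simp add: algebra_simps)
    have "y \<noteq> 0" using False by auto
    show ?thesis
    proof (cases "x = 0")
      case True
      have "y^2 \<ge> 1" using \<open>y \<noteq> 0\<close> by (simp add: power2_eq_square) (smt (verit) mult_le_cancel_left1 zero_less_mult_iff)
      then have "c*y^2 \<ge> c" using c0 by (simp add: le_mult1)
      thus ?thesis using True assms(2) by simp
    next
      case False
      then have "x^2 \<ge> 1" by (simp add: power2_eq_square) (smt (verit) mult_le_cancel_left1 zero_less_mult_iff)
      then have "a*x^2 \<ge> a" using a0 by (simp add: le_mult1)
      thus ?thesis using h by linarith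
    qed
  qed
qed

theorem proposition3p1:
  fixes D p :: int and f :: bqf
  assumes "D > 0" and "prime p" and "D > p^2"
    and "reduced f" and "disc f = -4*D*p^2"
    and "primitive f" and "pos_def f"
    and "derived_from p f (1, 0, D)"
    and "\<not> form_equiv f (1, 0, D*p^2)"
  shows "\<exists>k::int. f = (p^2, 2*p*k, k^2 + D) \<and> -p \<le> 2*k \<and> 2*k \<le> p"
proof -
  obtain g0 a1 b1 c1 d1 where g: "form_equiv (1,0,D) g0" and m: "a1*d1 - b1*c1 = p"
     and fe: "form_equiv (subst_form g0 a1 b1 c1 d1) f"
    using assms(8) unfolding derived_from_def by blast
  obtain a0 b0 c0 d0 where d0: "a0*d0 - b0*c0 = 1" and g0: "g0 = subst_form (1,0,D) a0 b0 c0 d0"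
    using g unfolding form_equiv_def by blast
  obtain a2 b2 c2 d2 where d2: "a2*d2 - b2*c2 = 1" and f2: "f = subst_form (subst_form g0 a1 b1 c1 d1) a2 b2 c2 d2"
    using fe unfolding form_equiv_def by blast
  define e1 where "e1 = a0*a1 + b0*c1"
  define e2 where "e2 = a0*b1 + b0*d1"
  define e3 where "e3 = c0*a1 + d0*c1"
  define e4 where "e4 = c0*b1 + d0*d1"
  define al where "al = e1*a2 + e2*c2"
  define be where "be = e1*b2 + e2*d2"
  define ga where "ga = e3*a2 + e4*c2"
  define de where "de = e3*b2 + e4*d2"
  have fN: "f = subst_form (1,0,D) al be ga de"
    using f2 g0 by (simp only: subst_comp e1_def[symmetric] e2_def[symmetric] e3_def[symmetric] e4_def[symmetric] al_def[symmetric] be_def[symmetric] ga_def[symmetric] de_def[symmetric])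
  have det1: "e1*e4 - e2*e3 = p" unfolding e1_def e2_def e3_def e4_def
  proof -
    have "(a0*a1 + b0*c1) * (c0*b1 + d0*d1) - (a0*b1 + b0*d1) * (c0*a1 + d0*c1) = (a0*d0 - b0*c0)*(a1*d1 - b1*c1)"
      by (simp add: algebra_simps)
    thus "(a0*a1 + b0*c1) * (c0*b1 + d0*d1) - (a0*b1 + b0*d1) * (c0*a1 + d0*c1) = p" using d0 m by simp
  qed
  have det: "al*de - be*ga = p"
  proof -
    have "al*de - be*ga = (e1*e4 - e2*e3)*(a2*d2 - b2*c2)" unfolding al_def be_def ga_def de_def
      by (simp add: algebra_simps)
    thus ?thesis using det1 d2 by simp
  qed
  have fexp: "f = (al^2 + D*ga^2, 2*al*be + 2*D*ga*de, be^2 + D*de^2)"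
    using fN by (simp add: algebra_simps)
  define a where "a = al^2 + D*ga^2"
  define b where "b = 2*al*be + 2*D*ga*de"
  define c where "c = be^2 + D*de^2"
  have fabc: "f = (a,b,c)" using fexp a_def b_def c_def by simp
  have red: "\<bar>b\<bar> \<le> a" "a \<le> c" "(\<bar>b\<bar> = a \<or> a = c) \<longrightarrow> b \<ge> 0" using assms(4) fabc by auto
  have p0: "p > 0" using assms(2) by (simp add: prime_gt_0_int)
  have nz: "(de, -ga) \<noteq> (0,0)" using det p0 by auto
  have val: "a*de^2 + b*de*(-ga) + c*(-ga)^2 = p^2"
  proof -
    have "a*de^2 + b*de*(-ga) + c*(-ga)^2 = (al*de - be*ga)^2" unfolding a_def b_def c_def
      by (simp add: algebra_simps power2_eq_square)
    thus ?thesis using det by simp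
  qed
  have "a \<le> p^2" using reduced_min[OF red(1) red(2) nz] val by simp
  have ga0: "ga = 0"
  proof (rule ccontr)
    assume "ga \<noteq> 0"
    then have "ga^2 \<ge> 1" by (simp add: power2_eq_square) (smt (verit) mult_le_cancel_left1 zero_less_mult_iff)
    then have "D*ga^2 \<ge> D" using assms(1) by (simp add: le_mult1)
    moreover have "al^2 \<ge> 0" by simp
    ultimately show False using \<open>a \<le> p^2\<close> assms(3) a_def by linarith
  qed
  have ad: "p = al * de" using det ga0 by simp
  have irr: "irreducible p" using assms(2) by (metis prime_elem_imp_irreducible prime_imp_prime_elem)
  have "al dvd 1 \<or> de dvd 1" using irreducibleD[OF irr ad] .
  then have "\<bar>al\<bar> = 1 \<or> \<bar>de\<bar> = 1" by auto
  then show ?thesis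
  proof
    assume h: "\<bar>al\<bar> = 1"
    have al2: "al^2 = 1" using h by (metis abs_power2 power2_abs power_one)
    have "a = 1" using a_def ga0 al2 by simp
    have "\<bar>b\<bar> = 2*\<bar>be\<bar>" using b_def ga0 h by (simp add: abs_mult)
    then have "be = 0" using red(1) \<open>a = 1\<close> by linarith
    have "de^2 = p^2" using ad al2 by (simp add: power_mult_distrib)
    then have "f = (1, 0, D*p^2)" using fabc \<open>a = 1\<close> b_def c_def ga0 \<open>be = 0\<close> by (simp add: mult.commute)
    moreover have "form_equiv f f" unfolding form_equiv_def
      by (rule exI[of _ 1], rule exI[of _ 0], rule exI[of _ 0], rule exI[of _ 1]) (cases f, simp)
    ultimately show ?thesis using assms(9) by simp
  next
    assume h: "\<bar>de\<bar> = 1"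
    have de2: "de^2 = 1" using h by (metis abs_power2 power2_abs power_one)
    have "al^2 = p^2" using ad de2 by (simp add: power_mult_distrib)
    define k where "k = de*be"
    have alk: "al*be = p*k" using ad de2 k_def by (simp add: power2_eq_square algebra_simps)
    have k2: "k^2 = be^2" using k_def de2 by (simp add: power_mult_distrib)
    have fk: "f = (p^2, 2*p*k, k^2 + D)" using fabc a_def b_def c_def ga0 \<open>al^2 = p^2\<close> alk k2 de2
      by (simp add: mult.assoc)
    have "\<bar>2*p*k\<bar> \<le> p^2" using red(1) fk fabc by simp
    then have "p * \<bar>2*k\<bar> \<le> p * p" using p0 by (simp add: abs_mult power2_eq_square)
    then have "\<bar>2*k\<bar> \<le> p" using p0 by simp
    then show ?thesis using fk by auto
  qed
qed

end
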